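(* Fix $\lambda_1,\lambda_2,\lambda_3\in\mathbb{Z}_{\ge0}$ and an infinite reduced sequence $\mathbf{w}=[w_1,w_2,\dots]$. Then the ratio number sequence $\{k_j\}_{j\ge1}$ associated with $\mathbf{w}$ is strictly increasing.
   Context: Generalized Markov mutations: $\mu_1(x_1,x_2,x_3)=(\frac{x_2^2+\lambda_1x_2x_3+x_3^2}{x_1},x_2,x_3)$, $\mu_2(x_1,x_2,x_3)=(x_1,\frac{x_1^2+\lambda_2x_1x_3+x_3^2}{x_2},x_3)$, $\mu_3(x_1,x_2,x_3)=(x_1,x_2,\frac{x_1^2+\lambda_3x_1x_2+x_2^2}{x_3})$. A sequence with entries in $\{1,2,3\}$ is reduced if consecutive entries differ. Ratio number sequence: $T_0=(1,1,1)$, $T_j=\mu_{w_j}(T_{j-1})$, and $k_j$ is the $w_j$-th component of $T_j$ divided by the product of the other two components of $T_j$. *)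

theory Defs
  imports Main Complex_Main
begin

type_synonym triple = "real \<times> real \<times> real"

definition gmut :: "nat \<Rightarrow> nat \<Rightarrow> nat \<Rightarrow> nat \<Rightarrow> triple \<Rightarrow> triple" where
  "gmut l1 l2 l3 i t = (case t of (x1, x2, x3) \<Rightarrow>
     (if i = 1 then ((x2^2 + real l1 * x2 * x3 + x3^2) / x1, x2, x3)
      else if i = 2 then (x1, (x1^2 + real l2 * x1 * x3 + x3^2) / x2, x3)
      else if i = 3 then (x1, x2, (x1^2 + real l3 * x1 * x2 + x2^2) / x3)
      else (x1, x2, x3)))"

definition comp :: "nat \<Rightarrow> triple \<Rightarrow> real" where
  "comp i t = (case t of (x1, x2, x3) \<Rightarrow>
     (if i = 1 then x1 else if i = 2 then x2 else x3))"

text \<open>T_0 = (1,1,1), T_j = mu_{w_j}(T_{j-1}); the sequence w is indexed from 1 (w 0 unused).\<close>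
primrec Tseq :: "nat \<Rightarrow> nat \<Rightarrow> nat \<Rightarrow> (nat \<Rightarrow> nat) \<Rightarrow> nat \<Rightarrow> triple" where
  "Tseq l1 l2 l3 w 0 = (1, 1, 1)"
| "Tseq l1 l2 l3 w (Suc j) = gmut l1 l2 l3 (w (Suc j)) (Tseq l1 l2 l3 w j)"

definition ratio_num :: "nat \<Rightarrow> nat \<Rightarrow> nat \<Rightarrow> (nat \<Rightarrow> nat) \<Rightarrow> nat \<Rightarrow> real" where
  "ratio_num l1 l2 l3 w j =
     comp (w j) (Tseq l1 l2 l3 w j) /
     (\<Prod>i\<in>{1,2,3} - {w j}. comp i (Tseq l1 l2 l3 w j))"

definition reduced_seq :: "(nat \<Rightarrow> nat) \<Rightarrow> bool" where
  "reduced_seq w \<longleftrightarrow> (\<forall>j\<ge>1. w j \<in> {1,2,3} \<and> w (Suc j) \<noteq> w j)"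

end

theory Submission
  imports Defs
begin

lemma Tseq_pos:
  "0 < fst (Tseq l1 l2 l3 w j) \<and> 0 < fst (snd (Tseq l1 l2 l3 w j)) \<and> 0 < snd (snd (Tseq l1 l2 l3 w j))"
proof (induction j)
  case 0
  then show ?case by simp
next
  case (Suc j)
  obtain x1 x2 x3 where T: "Tseq l1 l2 l3 w j = (x1, x2, x3)" by (metis prod_cases3)
  with Suc have p: "0 < x1" "0 < x2" "0 < x3" by auto
  have a: "0 < (x2^2 + real l1 * x2 * x3 + x3^2) / x1" using p by (simp add: add_pos_nonneg add_nonneg_pos)
  have b: "0 < (x1^2 + real l2 * x1 * x3 + x3^2) / x2" using p by (simp add: add_pos_nonneg add_nonneg_pos)
  have c: "0 < (x1^2 + real l3 * x1 * x2 + x2^2) / x3" using p by (simp add: add_pos_nonneg add_nonneg_pos)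
  show ?case using p a b c by (simp add: T gmut_def)
qed

lemma step:
  assumes "reduced_seq w" "1 \<le> j"
  shows "ratio_num l1 l2 l3 w j < ratio_num l1 l2 l3 w (Suc j)"
proof -
  obtain x1 x2 x3 where T: "Tseq l1 l2 l3 w j = (x1, x2, x3)" by (metis prod_cases3)
  with Tseq_pos[of l1 l2 l3 w j] have p: "0 < x1" "0 < x2" "0 < x3" by auto
  have ab: "w j \<in> {1,2,3}" "w (Suc j) \<in> {1,2,3}" "w (Suc j) \<noteq> w j"
    using assms unfolding reduced_seq_def by auto
  have e: "{Suc 0,2,3} - {Suc 0} = {2,3::nat}" "{Suc 0,2,3} - {2::nat} = {Suc 0,3}" "{Suc 0,2,3} - {3::nat} = {Suc 0,2}" by auto
  have l: "x / (y * z) < ((x^2 + real l * x * z + z^2) / y) / (x * z)"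
    if h: "0 < x" "0 < y" "0 < z" for x y z :: real and l :: nat
  proof -
    have "x * x < x^2 + real l * x * z + z^2"
      using h by (simp add: power2_eq_square add_nonneg_pos)
    then show ?thesis
      using h by (simp add: field_simps)
  qed
  have l': "x / (y * z) < ((z^2 + real l * z * x + x^2) / y) / (z * x)"
    if h: "0 < x" "0 < y" "0 < z" for x y z :: real and l :: nat
  proof -
    have "x * x < z^2 + real l * z * x + x^2"
      using h by (simp add: power2_eq_square add_pos_nonneg)
    then show ?thesis
      using h by (simp add: field_simps)
  qed
  from ab consider "w j = 1" "w (Suc j) = 2" | "w j = 1" "w (Suc j) = 3"
    | "w j = 2" "w (Suc j) = 1" | "w j = 2" "w (Suc j) = 3"
    | "w j = 3" "w (Suc j) = 1" | "w j = 3" "w (Suc j) = 2" by auto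
  then show ?thesis
  proof cases
    case 1 then show ?thesis using l[OF p(1) p(2) p(3), of l2]
      by (simp add: ratio_num_def T gmut_def comp_def e mult_ac add_ac)
  next
    case 2 then show ?thesis using l[OF p(1) p(3) p(2), of l3]
      by (simp add: ratio_num_def T gmut_def comp_def e mult_ac add_ac)
  next
    case 3 then show ?thesis using l'[OF p(2) p(1) p(3), of l1]
      by (simp add: ratio_num_def T gmut_def comp_def e mult_ac add_ac)
  next
    case 4 then show ?thesis using l[OF p(2) p(3) p(1), of l3]
      by (simp add: ratio_num_def T gmut_def comp_def e mult_ac add_ac)
  next
    case 5 then show ?thesis using l'[OF p(3) p(1) p(2), of l1]
      by (simp add: ratio_num_def T gmut_def comp_def e mult_ac add_ac)
  next
    case 6 then show ?thesis using l'[OF p(3) p(2) p(1), of l2]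
      by (simp add: ratio_num_def T gmut_def comp_def e mult_ac add_ac)
  qed
qed

theorem lemma6p1:
  fixes l1 l2 l3 :: nat and w :: "nat \<Rightarrow> nat"
  assumes "reduced_seq w"
  shows "\<forall>i j. 1 \<le> i \<longrightarrow> i < j \<longrightarrow> ratio_num l1 l2 l3 w i < ratio_num l1 l2 l3 w j"
proof (intro allI impI)
  fix i j :: nat
  assume i: "1 \<le> i" and "i < j"
  then show "ratio_num l1 l2 l3 w i < ratio_num l1 l2 l3 w j"
  proof (induction j)
    case 0 then show ?case by simp
  next
    case (Suc j)
    have s: "ratio_num l1 l2 l3 w j < ratio_num l1 l2 l3 w (Suc j)"
      using step[OF assms] Suc.prems by simp
    show ?case
    proof (cases "i = j")
      case True then show ?thesis using s by simp
    next
      case False then show ?thesis using Suc s by force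
    qed
  qed
qed

end
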